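(* Let $D$ be a finite set of $n$ training instances partitioned into $K$ disjoint nonempty clusters $D = C_1 \cup \dots \cup C_K$ with $|C_k| = n_k \ge 1$. Let $m_1,\dots,m_K > 0$ and $\lambda_1, \lambda_2 > 0$ with $m_k = \lambda_2 n_k$ for all $k$, and set $u_k = \lambda_1 m_k$. Define $v(S) = \sum_{k=1}^K u_k\, \mathbf{1}\{S \cap C_k \neq \emptyset\}$ for $S \subseteq D$. Then for every $k$ and every $i \in C_k$: (i) the Shapley value of $i$ in $(D,v)$ equals $\lambda_1\lambda_2$, independently of $k$; (ii) the Banzhaf value of $i$ in $(D,v)$ equals $\lambda_1\lambda_2\, n_k/2^{\,n_k-1}$, and the map $n_k \mapsto n_k/2^{\,n_k-1}$ is non-increasing on positive integers and strictly decreasing for $n_k \ge 2$.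
   Context: Interpretation: $m_k$ is the number of test points associated with cluster $C_k$ and $u_k$ the utility of the cluster (e.g. $\lambda_1 = 1/\sum_k m_k$ for accuracy). The Shapley value of $i$ is $\phi_i = \mathbb{E}_{\pi}[v(S_i(\pi)\cup\{i\}) - v(S_i(\pi))]$ with $\pi$ a uniformly random ordering of $D$ and $S_i(\pi)$ the players preceding $i$; the Banzhaf value is $\phi_i = 2^{-(n-1)}\sum_{S\subseteq D\setminus\{i\}}(v(S\cup\{i\})-v(S))$ where $n=|D|$. *)

theory Defs
  imports Complex_Main "HOL-Combinatorics.Multiset_Permutations"
begin

definition preceding :: "'a list \<Rightarrow> 'a \<Rightarrow> 'a set" where
  "preceding ord i = set (takeWhile (\<lambda>x. x \<noteq> i) ord)"

definition shapley :: "'a set \<Rightarrow> ('a set \<Rightarrow> real) \<Rightarrow> 'a \<Rightarrow> real" where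
  "shapley D v i =
     (\<Sum>ord\<in>permutations_of_set D. v (preceding ord i \<union> {i}) - v (preceding ord i))
       / real (card (permutations_of_set D))"

definition banzhaf :: "'a set \<Rightarrow> ('a set \<Rightarrow> real) \<Rightarrow> 'a \<Rightarrow> real" where
  "banzhaf D v i =
     (\<Sum>S\<in>Pow (D - {i}). v (S \<union> {i}) - v S) / 2 ^ (card D - 1)"

end

theory Submission
  imports Defs
begin

definition firstin :: "'a set \<Rightarrow> 'a list \<Rightarrow> 'a" where
  "firstin C ord = hd (filter (\<lambda>x. x \<in> C) ord)"

lemma prec_first:
  assumes "i \<in> set ord" "i \<in> C"
  shows "(preceding ord i \<inter> C = {}) \<longleftrightarrow> firstin C ord = i"
  using assms unfolding preceding_def firstin_def
  by (induction ord) auto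

lemma firstin_in:
  assumes "set ord \<inter> C \<noteq> {}"
  shows "firstin C ord \<in> C"
proof -
  have "filter (\<lambda>x. x \<in> C) ord \<noteq> []" using assms by (auto simp: filter_empty_conv)
  then have "hd (filter (\<lambda>x. x \<in> C) ord) \<in> set (filter (\<lambda>x. x \<in> C) ord)" by (rule hd_in_set)
  then show ?thesis unfolding firstin_def by simp
qed

lemma firstin_map:
  assumes "i \<in> C" "j \<in> C" "set ord \<inter> C \<noteq> {}"
  shows "firstin C (map (Transposition.transpose i j) ord) = Transposition.transpose i j (firstin C ord)"
proof -
  have "filter (\<lambda>x. x \<in> C) (map (Transposition.transpose i j) ord)
      = map (Transposition.transpose i j) (filter (\<lambda>x. x \<in> C) ord)"
    by (induction ord) (use assms in \<open>auto simp: transpose_def\<close>)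
  moreover have "filter (\<lambda>x. x \<in> C) ord \<noteq> []" using assms by (auto simp: filter_empty_conv)
  ultimately show ?thesis unfolding firstin_def by (simp add: hd_map)
qed

lemma card_fibers:
  assumes finD: "finite D" and CD: "C \<subseteq> D" and iC: "i \<in> C" and jC: "j \<in> C"
  shows "card {ord \<in> permutations_of_set D. firstin C ord = j}
       = card {ord \<in> permutations_of_set D. firstin C ord = i}"
proof -
  let ?t = "map (Transposition.transpose i j)"
  have ne: "set ord \<inter> C \<noteq> {}" if "ord \<in> permutations_of_set D" for ord
  proof -
    have "set ord = D" using that by (auto dest: permutations_of_setD)
    then show ?thesis using iC CD by auto
  qed
  have perm: "?t ord \<in> permutations_of_set D" if "ord \<in> permutations_of_set D" for ord
  proof -
    have "set ord = D" "distinct ord" using that by (auto dest: permutations_of_setD)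
    moreover have "i \<in> D" "j \<in> D" using iC jC CD by auto
    moreover have "distinct (?t ord)" using \<open>distinct ord\<close> by (simp add: distinct_map)
    ultimately show ?thesis by (auto intro!: permutations_of_setI)
  qed
  have inv: "?t (?t ord) = ord" for ord by (simp add: map_idI)
  show ?thesis
  proof (rule bij_betw_same_card[of ?t], rule bij_betw_byWitness[of _ ?t])
    show "\<forall>a\<in>{ord \<in> permutations_of_set D. firstin C ord = j}. ?t (?t a) = a" using inv by simp
    show "\<forall>a\<in>{ord \<in> permutations_of_set D. firstin C ord = i}. ?t (?t a) = a" using inv by simp
    show "?t ` {ord \<in> permutations_of_set D. firstin C ord = j} \<subseteq> {ord \<in> permutations_of_set D. firstin C ord = i}"
      using perm ne firstin_map[OF iC jC] by auto
    show "?t ` {ord \<in> permutations_of_set D. firstin C ord = i} \<subseteq> {ord \<in> permutations_of_set D. firstin C ord = j}"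
      using perm ne firstin_map[OF iC jC] by auto
  qed
qed

lemma card_first:
  assumes finD: "finite D" and CD: "C \<subseteq> D" and iC: "i \<in> C"
  shows "card (permutations_of_set D) = card C * card {ord \<in> permutations_of_set D. firstin C ord = i}"
proof -
  have fin: "finite (permutations_of_set D)" using finD by simp
  have finC: "finite C" using finD CD finite_subset by blast
  have img: "firstin C ` permutations_of_set D \<subseteq> C"
  proof
    fix x assume "x \<in> firstin C ` permutations_of_set D"
    then obtain ord where o: "ord \<in> permutations_of_set D" "x = firstin C ord" by auto
    have "set ord = D" using o by (auto dest: permutations_of_setD)
    then have "set ord \<inter> C \<noteq> {}" using iC CD by auto
    then show "x \<in> C" using o firstin_in by simp
  qed
  have "card (permutations_of_set D) = (\<Sum>ord\<in>permutations_of_set D. 1)" by simp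
  also have "\<dots> = (\<Sum>j\<in>C. \<Sum>ord\<in>{ord \<in> permutations_of_set D. firstin C ord = j}. 1)"
    using sum.group[OF fin finC img, of "\<lambda>_. 1::nat"] by simp
  also have "\<dots> = (\<Sum>j\<in>C. card {ord \<in> permutations_of_set D. firstin C ord = i})"
    using card_fibers[OF finD CD iC] by simp
  finally show ?thesis by simp
qed


lemma g_step:
  assumes "1 \<le> n"
  shows "real (Suc n) / 2 ^ (Suc n - 1) \<le> real n / 2 ^ (n - 1)"
    and "2 \<le> n \<Longrightarrow> real (Suc n) / 2 ^ (Suc n - 1) < real n / 2 ^ (n - 1)"
proof -
  obtain p where p: "n = Suc p" using assms by (cases n) auto
  show "real (Suc n) / 2 ^ (Suc n - 1) \<le> real n / 2 ^ (n - 1)"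
    unfolding p by (simp add: field_simps)
  show "2 \<le> n \<Longrightarrow> real (Suc n) / 2 ^ (Suc n - 1) < real n / 2 ^ (n - 1)"
    unfolding p by (simp add: field_simps)
qed

lemma g_mono:
  assumes "1 \<le> a" "a \<le> b"
  shows "real b / 2 ^ (b - 1) \<le> real a / 2 ^ (a - 1)"
  using assms(2)
proof (induction b rule: dec_induct)
  case base then show ?case by simp
next
  case (step n)
  have "1 \<le> n" using assms step by simp
  then show ?case using g_step(1)[of n] step by linarith
qed

lemma g_strict:
  assumes "2 \<le> a" "a < b"
  shows "real b / 2 ^ (b - 1) < real a / 2 ^ (a - 1)"
proof -
  have "real b / 2 ^ (b - 1) \<le> real (Suc a) / 2 ^ (Suc a - 1)"
    using g_mono[of "Suc a" b] assms by simp
  also have "\<dots> < real a / 2 ^ (a - 1)" using g_step(2)[of a] assms by simp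
  finally show ?thesis .
qed

theorem mainTheorem3:
  fixes D :: "'a set" and K :: nat and C :: "nat \<Rightarrow> 'a set"
    and m :: "nat \<Rightarrow> real" and lambda1 lambda2 :: real
  assumes finD: "finite D"
    and cover: "(\<Union>k\<in>{1..K}. C k) = D"
    and disj: "\<And>k l. k \<in> {1..K} \<Longrightarrow> l \<in> {1..K} \<Longrightarrow> k \<noteq> l \<Longrightarrow> C k \<inter> C l = {}"
    and nonempty: "\<And>k. k \<in> {1..K} \<Longrightarrow> C k \<noteq> {}"
    and mpos: "\<And>k. k \<in> {1..K} \<Longrightarrow> m k > 0"
    and l1: "lambda1 > 0" and l2: "lambda2 > 0"
    and mdef: "\<And>k. k \<in> {1..K} \<Longrightarrow> m k = lambda2 * real (card (C k))"
  shows "(\<forall>k\<in>{1..K}. \<forall>i\<in>C k.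
            let v = (\<lambda>S. \<Sum>j\<in>{1..K}. (lambda1 * m j) * (if S \<inter> C j \<noteq> {} then 1 else 0))
            in shapley D v i = lambda1 * lambda2
             \<and> banzhaf D v i = lambda1 * lambda2 * real (card (C k)) / 2 ^ (card (C k) - 1))
       \<and> (\<forall>a b::nat. 1 \<le> a \<longrightarrow> a \<le> b \<longrightarrow> real b / 2 ^ (b - 1) \<le> real a / 2 ^ (a - 1))
       \<and> (\<forall>a b::nat. 2 \<le> a \<longrightarrow> a < b \<longrightarrow> real b / 2 ^ (b - 1) < real a / 2 ^ (a - 1))"
proof (intro conjI ballI allI impI)
  show "real b / 2 ^ (b - 1) \<le> real a / 2 ^ (a - 1)" if "1 \<le> a" "a \<le> b" for a b :: nat
    using g_mono that by blast
  show "real b / 2 ^ (b - 1) < real a / 2 ^ (a - 1)" if "2 \<le> a" "a < b" for a b :: nat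
    using g_strict that by blast
  fix k i assume k: "k \<in> {1..K}" and i: "i \<in> C k"
  define v where "v = (\<lambda>S. \<Sum>j\<in>{1..K}. (lambda1 * m j) * (if S \<inter> C j \<noteq> {} then (1::real) else 0))"
  have CD: "C k \<subseteq> D" using cover k by auto
  have iD: "i \<in> D" using CD i by auto
  have finC: "finite (C k)" using finD CD finite_subset by blast
  have nk: "card (C k) \<ge> 1" using nonempty[OF k] finC by (simp add: Suc_le_eq card_gt_0_iff)
  have marg: "v (S \<union> {i}) - v S = lambda1 * m k * (if S \<inter> C k = {} then 1 else 0)" for S
  proof -
    have "v (S \<union> {i}) - v S = (\<Sum>j\<in>{1..K}. lambda1 * m j *
        ((if (S \<union> {i}) \<inter> C j \<noteq> {} then 1 else 0) - (if S \<inter> C j \<noteq> {} then 1 else 0)))"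
      unfolding v_def by (simp add: sum_subtractf[symmetric] algebra_simps)
    also have "\<dots> = (\<Sum>j\<in>{1..K}. if j = k then lambda1 * m k * (if S \<inter> C k = {} then 1 else 0) else 0)"
    proof (rule sum.cong)
      fix j assume j: "j \<in> {1..K}"
      show "lambda1 * m j *
        ((if (S \<union> {i}) \<inter> C j \<noteq> {} then 1 else 0) - (if S \<inter> C j \<noteq> {} then 1 else 0))
        = (if j = k then lambda1 * m k * (if S \<inter> C k = {} then 1 else 0) else 0)"
      proof (cases "j = k")
        case True then show ?thesis using i by auto
      next
        case False
        then have "i \<notin> C j" using disj[OF k j] i by auto
        then have "(S \<union> {i}) \<inter> C j = S \<inter> C j" by auto
        then show ?thesis using False by simp
      qed
    qed simp
    also have "\<dots> = lambda1 * m k * (if S \<inter> C k = {} then 1 else 0)"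
      using k by (simp add: sum.delta)
    finally show ?thesis .
  qed
  let ?P = "permutations_of_set D"
  let ?N = "card {ord \<in> ?P. firstin (C k) ord = i}"
  have cardP: "card ?P = card (C k) * ?N" using card_first[OF finD CD i] .
  have Ppos: "card ?P > 0" using finD by (simp add: card_permutations_of_set)
  have Npos: "?N > 0" using Ppos cardP by (simp add: gr0I)
  have "(\<Sum>ord\<in>?P. v (preceding ord i \<union> {i}) - v (preceding ord i))
      = (\<Sum>ord\<in>?P. if firstin (C k) ord = i then lambda1 * m k else 0)"
  proof (rule sum.cong)
    fix ord assume o: "ord \<in> ?P"
    have "i \<in> set ord" using o iD by (auto dest: permutations_of_setD)
    then show "v (preceding ord i \<union> {i}) - v (preceding ord i)
        = (if firstin (C k) ord = i then lambda1 * m k else 0)"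
      using marg prec_first[OF _ i] by simp
  qed simp
  also have "\<dots> = lambda1 * m k * ?N"
    using finD by (simp add: sum.If_cases Int_def)
  finally have sh: "shapley D v i = lambda1 * m k * ?N / card ?P"
    unfolding shapley_def by simp
  have shres: "shapley D v i = lambda1 * lambda2"
  proof -
    have gen: "\<And>N c::nat. N > 0 \<Longrightarrow> c \<ge> 1 \<Longrightarrow>
        lambda1 * (lambda2 * real c) * real N / real (c * N) = lambda1 * lambda2" by simp
    show ?thesis unfolding sh cardP mdef[OF k] using gen[OF Npos nk] .
  qed
  have "(\<Sum>S\<in>Pow (D - {i}). v (S \<union> {i}) - v S)
      = (\<Sum>S\<in>Pow (D - {i}). if S \<inter> C k = {} then lambda1 * m k else 0)"
    by (rule sum.cong) (simp_all only: marg, simp)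
  also have "\<dots> = lambda1 * m k * card {S \<in> Pow (D - {i}). S \<inter> C k = {}}"
    using finD by (simp add: sum.If_cases Int_def)
  also have "{S \<in> Pow (D - {i}). S \<inter> C k = {}} = Pow (D - C k)"
    using i by auto
  also have "card (Pow (D - C k)) = 2 ^ (card D - card (C k))"
    using finD CD finC by (simp add: card_Pow card_Diff_subset)
  finally have bz: "banzhaf D v i = lambda1 * m k * 2 ^ (card D - card (C k)) / 2 ^ (card D - 1)"
    unfolding banzhaf_def by simp
  have le: "card (C k) \<le> card D" using finD CD card_mono by blast
  have "(2::real) ^ (card D - 1) = 2 ^ (card D - card (C k)) * 2 ^ (card (C k) - 1)"
    using le nk by (simp add: power_add[symmetric])
  then have "banzhaf D v i = lambda1 * lambda2 * real (card (C k)) / 2 ^ (card (C k) - 1)"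
    unfolding bz mdef[OF k] by simp
  with shres show "let v = (\<lambda>S. \<Sum>j\<in>{1..K}. (lambda1 * m j) * (if S \<inter> C j \<noteq> {} then 1 else 0))
            in shapley D v i = lambda1 * lambda2
             \<and> banzhaf D v i = lambda1 * lambda2 * real (card (C k)) / 2 ^ (card (C k) - 1)"
    unfolding v_def Let_def by simp
qed

end
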